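(* Let $L$ be a simple Lie algebra over a field $k$ generated by its pure extremal elements, let $x,y\in E$ with $g(x,y)=1$ and let $L=\bigoplus_{i=-2}^2L_i$ be the associated $5$-grading. For $i\in\{-1,1\}$ let $Z_i=\{z\in L_i:[z,L_i]=0\}$. Then $Z_{-1}=Z_1=0$.
   Context: A nonzero $a\in L$ is extremal if there is $g_a\colon L\to k$ with $[a,[a,u]]=2g_a(u)a$, $[[a,u],[a,w]]=g_a([u,w])a+g_a(w)[a,u]-g_a(u)[a,w]$, $[a,[u,[a,w]]]=g_a([u,w])a-g_a(w)[a,u]-g_a(u)[a,w]$ for all $u,w$; sandwiches satisfy $[a,[a,u]]=0=[a,[u,[a,w]]]$; pure = non-sandwich; $E$ = set of extremal elements; $g$ = unique symmetric bilinear form with $g(a,u)=g_a(u)$ for $a\in E$. The $5$-grading associated with $x,y$: $L_{-2}=kx$, $L_{-1}=[x,U]$, $L_0=\{l:[x,l]\in kx,[y,l]\in ky\}$, $L_1=[y,U]$, $L_2=ky$, $U=\{u:g(u,x)=g(u,y)=g(u,[x,y])=0\}$. *)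

theory Defs
  imports Complex_Main
begin

definition lie_algebra :: "('k::field \<Rightarrow> 'L::ab_group_add \<Rightarrow> 'L) \<Rightarrow> ('L \<Rightarrow> 'L \<Rightarrow> 'L) \<Rightarrow> bool" where
  "lie_algebra scale br \<longleftrightarrow>
     vector_space scale \<and>
     (\<forall>x y z. br (x + y) z = br x z + br y z) \<and>
     (\<forall>x y z. br x (y + z) = br x y + br x z) \<and>
     (\<forall>c x y. br (scale c x) y = scale c (br x y)) \<and>
     (\<forall>c x y. br x (scale c y) = scale c (br x y)) \<and>
     (\<forall>x. br x x = 0) \<and>
     (\<forall>x y z. br x (br y z) + br y (br z x) + br z (br x y) = 0)"

definition lie_ideal :: "('k::field \<Rightarrow> 'L::ab_group_add \<Rightarrow> 'L) \<Rightarrow> ('L \<Rightarrow> 'L \<Rightarrow> 'L) \<Rightarrow> 'L set \<Rightarrow> bool" where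
  "lie_ideal scale br I \<longleftrightarrow> module.subspace scale I \<and> (\<forall>u. \<forall>x\<in>I. br u x \<in> I)"

definition lie_subalgebra :: "('k::field \<Rightarrow> 'L::ab_group_add \<Rightarrow> 'L) \<Rightarrow> ('L \<Rightarrow> 'L \<Rightarrow> 'L) \<Rightarrow> 'L set \<Rightarrow> bool" where
  "lie_subalgebra scale br S \<longleftrightarrow> module.subspace scale S \<and> (\<forall>x\<in>S. \<forall>y\<in>S. br x y \<in> S)"

definition simple_lie_algebra :: "('k::field \<Rightarrow> 'L::ab_group_add \<Rightarrow> 'L) \<Rightarrow> ('L \<Rightarrow> 'L \<Rightarrow> 'L) \<Rightarrow> bool" where
  "simple_lie_algebra scale br \<longleftrightarrow> lie_algebra scale br \<and>
     (\<exists>x y. br x y \<noteq> 0) \<and>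
     (\<forall>I. lie_ideal scale br I \<longrightarrow> I = {0} \<or> I = UNIV)"

definition lie_generated_by :: "('k::field \<Rightarrow> 'L::ab_group_add \<Rightarrow> 'L) \<Rightarrow> ('L \<Rightarrow> 'L \<Rightarrow> 'L) \<Rightarrow> 'L set \<Rightarrow> bool" where
  "lie_generated_by scale br X \<longleftrightarrow> (\<forall>S. lie_subalgebra scale br S \<and> X \<subseteq> S \<longrightarrow> S = UNIV)"

definition extremal_ids :: "('k::field \<Rightarrow> 'L::ab_group_add \<Rightarrow> 'L) \<Rightarrow> ('L \<Rightarrow> 'L \<Rightarrow> 'L) \<Rightarrow> 'L \<Rightarrow> ('L \<Rightarrow> 'k) \<Rightarrow> bool" where
  "extremal_ids scale br a ga \<longleftrightarrow>
     (\<forall>u. br a (br a u) = scale (2 * ga u) a) \<and>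
     (\<forall>u w. br (br a u) (br a w) = scale (ga (br u w)) a + scale (ga w) (br a u) - scale (ga u) (br a w)) \<and>
     (\<forall>u w. br a (br u (br a w)) = scale (ga (br u w)) a - scale (ga w) (br a u) - scale (ga u) (br a w))"

definition extremal :: "('k::field \<Rightarrow> 'L::ab_group_add \<Rightarrow> 'L) \<Rightarrow> ('L \<Rightarrow> 'L \<Rightarrow> 'L) \<Rightarrow> 'L \<Rightarrow> bool" where
  "extremal scale br a \<longleftrightarrow> a \<noteq> 0 \<and> (\<exists>ga. extremal_ids scale br a ga)"

definition sandwich :: "('L::ab_group_add \<Rightarrow> 'L \<Rightarrow> 'L) \<Rightarrow> 'L \<Rightarrow> bool" where
  "sandwich br a \<longleftrightarrow> (\<forall>u. br a (br a u) = 0) \<and> (\<forall>u w. br a (br u (br a w)) = 0)"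

definition pure_extremal :: "('k::field \<Rightarrow> 'L::ab_group_add \<Rightarrow> 'L) \<Rightarrow> ('L \<Rightarrow> 'L \<Rightarrow> 'L) \<Rightarrow> 'L \<Rightarrow> bool" where
  "pure_extremal scale br a \<longleftrightarrow> extremal scale br a \<and> \<not> sandwich br a"

definition extremal_form :: "('k::field \<Rightarrow> 'L::ab_group_add \<Rightarrow> 'L) \<Rightarrow> ('L \<Rightarrow> 'L \<Rightarrow> 'L) \<Rightarrow> ('L \<Rightarrow> 'L \<Rightarrow> 'k) \<Rightarrow> bool" where
  "extremal_form scale br g \<longleftrightarrow>
     (\<forall>u v. g u v = g v u) \<and>
     (\<forall>u v w. g (u + v) w = g u w + g v w) \<and>
     (\<forall>c u w. g (scale c u) w = c * g u w) \<and>
     (\<forall>a. extremal scale br a \<longrightarrow> extremal_ids scale br a (g a))"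

definition grading_U :: "('L::ab_group_add \<Rightarrow> 'L \<Rightarrow> 'k::field) \<Rightarrow> ('L \<Rightarrow> 'L \<Rightarrow> 'L) \<Rightarrow> 'L \<Rightarrow> 'L \<Rightarrow> 'L set" where
  "grading_U g br x y = {u. g u x = 0 \<and> g u y = 0 \<and> g u (br x y) = 0}"

definition L_minus1 :: "('L::ab_group_add \<Rightarrow> 'L \<Rightarrow> 'k::field) \<Rightarrow> ('L \<Rightarrow> 'L \<Rightarrow> 'L) \<Rightarrow> 'L \<Rightarrow> 'L \<Rightarrow> 'L set" where
  "L_minus1 g br x y = br x ` grading_U g br x y"

definition L_plus1 :: "('L::ab_group_add \<Rightarrow> 'L \<Rightarrow> 'k::field) \<Rightarrow> ('L \<Rightarrow> 'L \<Rightarrow> 'L) \<Rightarrow> 'L \<Rightarrow> 'L \<Rightarrow> 'L set" where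
  "L_plus1 g br x y = br y ` grading_U g br x y"

definition centre_part :: "('L::ab_group_add \<Rightarrow> 'L \<Rightarrow> 'L) \<Rightarrow> 'L set \<Rightarrow> 'L set" where
  "centre_part br Li = {z \<in> Li. \<forall>w\<in>Li. br z w = 0}"

end

theory Submission
  imports Defs
begin

locale LA =
  fixes scale :: "'k::field \<Rightarrow> 'L::ab_group_add \<Rightarrow> 'L"
    and br :: "'L \<Rightarrow> 'L \<Rightarrow> 'L"
    and g :: "'L \<Rightarrow> 'L \<Rightarrow> 'k"
  assumes simple: "simple_lie_algebra scale br"
    and form: "extremal_form scale br g"
    and gen: "lie_generated_by scale br {a. pure_extremal scale br a}"
begin

lemma LAlg: "lie_algebra scale br"
  using simple by (simp add: simple_lie_algebra_def)

sublocale V: vector_space scale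
  using LAlg by (simp add: lie_algebra_def)

lemma br_add_left: "br (a + b) c = br a c + br b c"
  and br_add_right: "br a (b + c) = br a b + br a c"
  and br_scale_left: "br (scale k a) b = scale k (br a b)"
  and br_scale_right: "br a (scale k b) = scale k (br a b)"
  and br_self: "br a a = 0"
  and jacobi: "br a (br b c) + br b (br c a) + br c (br a b) = 0"
  using LAlg unfolding lie_algebra_def by simp_all

lemma br_zero_left[simp]: "br 0 a = 0"
  using br_add_left[of 0 0 a] by simp
lemma br_zero_right[simp]: "br a 0 = 0"
  using br_add_right[of a 0 0] by simp
lemma br_minus_left: "br (- a) b = - br a b"
  using br_add_left[of a "-a" b] by (simp add: eq_neg_iff_add_eq_0 add.commute)
lemma br_minus_right: "br a (- b) = - br a b"
  using br_add_right[of a b "-b"] by (simp add: eq_neg_iff_add_eq_0 add.commute)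
lemma br_diff_left: "br (a - b) c = br a c - br b c"
  using br_add_left[of a "-b" c] by (simp add: br_minus_left)
lemma br_diff_right: "br a (b - c) = br a b - br a c"
  using br_add_right[of a b "-c"] by (simp add: br_minus_right)
lemma anti: "br b a = - br a b"
proof -
  have "br (a+b) (a+b) = 0" by (rule br_self)
  moreover have "br (a+b) (a+b) = br a a + br a b + (br b a + br b b)"
    by (simp add: br_add_left br_add_right algebra_simps)
  ultimately have "br a b + br b a = 0" by (simp add: br_self)
  then have "br b a + br a b = 0" by (simp add: add.commute)
  then show ?thesis by (simp add: eq_neg_iff_add_eq_0)
qed

lemmas brs = br_add_left br_add_right br_scale_left br_scale_right br_minus_left br_minus_right
  br_diff_left br_diff_right br_self

lemma g_sym: "g u v = g v u"
  using form unfolding extremal_form_def by (elim conjE allE)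
lemma g_add_left: "g (u + v) w = g u w + g v w"
  using form unfolding extremal_form_def by (elim conjE allE)
lemma g_scale_left: "g (scale c u) w = c * g u w"
  using form unfolding extremal_form_def by (elim conjE allE)
lemma g_ext: "extremal scale br a \<Longrightarrow> extremal_ids scale br a (g a)"
  using form unfolding extremal_form_def by (elim conjE allE impE)

lemma g_add_right: "g w (u + v) = g w u + g w v"
  by (simp only: g_sym[of w] g_add_left)
lemma g_scale_right: "g w (scale c u) = c * g w u"
  by (simp only: g_sym[of w] g_scale_left)
lemma g_zero_left[simp]: "g 0 w = 0"
  using g_scale_left[of 0 0 w] by simp
lemma g_zero_right[simp]: "g w 0 = 0"
  using g_scale_right[of w 0 0] by simp
lemma g_minus_left: "g (- u) w = - g u w"
  using g_add_left[of u "-u" w] by (simp add: eq_neg_iff_add_eq_0 add.commute)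
lemma g_minus_right: "g w (- u) = - g w u"
  using g_add_right[of w u "-u"] by (simp add: eq_neg_iff_add_eq_0 add.commute)
lemma g_diff_left: "g (u - v) w = g u w - g v w"
  using g_add_left[of u "-v" w] by (simp add: g_minus_left)
lemma g_diff_right: "g w (u - v) = g w u - g w v"
  using g_add_right[of w u "-v"] by (simp add: g_minus_right)

lemmas gs = g_add_left g_add_right g_scale_left g_scale_right g_minus_left g_minus_right
  g_diff_left g_diff_right

lemma der: "br e (br a b) = br (br e a) b + br a (br e b)"
proof -
  have "br e (br a b) + br a (br b e) + br b (br e a) = 0" by (rule jacobi)
  moreover have "br a (br b e) = - br a (br e b)" by (simp only: anti[of b e] br_minus_right)
  moreover have "br b (br e a) = - br (br e a) b" by (rule anti)
  ultimately have "br e (br a b) - br a (br e b) - br (br e a) b = 0"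
    by (simp add: algebra_simps)
  then show ?thesis by (simp add: algebra_simps)
qed

lemma nonab: "\<exists>a b. br a b \<noteq> 0"
  using simple by (simp add: simple_lie_algebra_def)
lemma ideals: "lie_ideal scale br I \<Longrightarrow> I = {0} \<or> I = UNIV"
proof -
  have "\<forall>I. lie_ideal scale br I \<longrightarrow> I = {0} \<or> I = UNIV"
    using simple unfolding simple_lie_algebra_def by (elim conjE)
  then show "lie_ideal scale br I \<Longrightarrow> I = {0} \<or> I = UNIV" by (elim allE impE)
qed


lemma line_contra:
  assumes "a \<noteq> 0" and "\<And>w. \<exists>c. br a w = scale c a"
  shows False
proof -
  let ?I = "V.span {a}"
  have sp: "?I = range (\<lambda>k. scale k a)" by (rule V.span_singleton)
  have id: "lie_ideal scale br ?I"
    unfolding lie_ideal_def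
  proof (intro conjI allI ballI)
    show "V.subspace ?I" by (rule V.subspace_span)
  next
    fix u v assume "v \<in> ?I"
    then obtain k where v: "v = scale k a" using sp by auto
    obtain c where c: "br a u = scale c a" using assms(2) by blast
    have "br u v = scale k (br u a)" by (simp add: v br_scale_right)
    also have "\<dots> = scale (- (k * c)) a" by (simp add: anti[of u a] c)
    finally show "br u v \<in> ?I" unfolding sp by (rule range_eqI)
  qed
  have "a \<in> ?I" by (simp add: V.span_base)
  then have "?I = UNIV" using ideals[OF id] assms(1) by auto
  then have all: "\<And>p. \<exists>k. p = scale k a" using sp by (metis rangeE UNIV_I)
  obtain p q where pq: "br p q \<noteq> 0" using nonab by blast
  obtain k1 where "p = scale k1 a" using all by blast
  moreover obtain k2 where "q = scale k2 a" using all by blast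
  ultimately have "br p q = 0" by (simp add: br_scale_left br_scale_right br_self)
  with pq show False by simp
qed

lemma id1: assumes "extremal scale br a" shows "br a (br a u) = scale (2 * g a u) a"
  using g_ext[OF assms] unfolding extremal_ids_def by (elim conjE allE)
lemma id2: assumes "extremal scale br a" shows "br (br a u) (br a w) =
   scale (g a (br u w)) a + scale (g a w) (br a u) - scale (g a u) (br a w)"
  using g_ext[OF assms] unfolding extremal_ids_def by (elim conjE allE)
lemma id3: assumes "extremal scale br a" shows "br a (br u (br a w)) =
   scale (g a (br u w)) a - scale (g a w) (br a u) - scale (g a u) (br a w)"
  using g_ext[OF assms] unfolding extremal_ids_def by (elim conjE allE)
lemma ext_nz: "extremal scale br a \<Longrightarrow> a \<noteq> 0"
  unfolding extremal_def by simp

lemma g_self_aux: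
  assumes e: "extremal scale br a"
  shows "scale (g a (br a w)) a = scale (g a a) (br a w)"
proof -
  have "br a (br a (br a w)) = scale (g a (br a w)) a - scale (g a w) (br a a) - scale (g a a) (br a w)"
    by (rule id3[OF e])
  moreover have "br a (br a (br a w)) = 0" by (simp add: id1[OF e] br_scale_right br_self)
  ultimately show ?thesis by (simp add: br_self)
qed

lemma g_self: assumes e: "extremal scale br a" shows "g a a = 0"
proof (rule ccontr)
  assume ne: "g a a \<noteq> 0"
  show False
  proof (rule line_contra[OF ext_nz[OF e]])
    fix w
    have "br a w = scale (inverse (g a a)) (scale (g a a) (br a w))" using ne by simp
    also have "\<dots> = scale (inverse (g a a)) (scale (g a (br a w)) a)" using g_self_aux[OF e, of w] by simp
    also have "\<dots> = scale (inverse (g a a) * g a (br a w)) a" by simp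
    finally show "\<exists>c. br a w = scale c a" by blast
  qed
qed

lemma g_self_br: assumes e: "extremal scale br a" shows "g a (br a w) = 0"
  using g_self_aux[OF e, of w] g_self[OF e] ext_nz[OF e] by simp


definition phi where "phi e v = v + br e v + scale (g e v) e"
definition psi where "psi e v = v - br e v + scale (g e v) e"

lemma phi_add: "phi e (a + b) = phi e a + phi e b"
  by (simp add: phi_def brs gs algebra_simps)
lemma phi_scale: "phi e (scale c a) = scale c (phi e a)"
  by (simp add: phi_def brs gs algebra_simps)
lemma psi_add: "psi e (a + b) = psi e a + psi e b"
  by (simp add: psi_def brs gs algebra_simps)
lemma psi_scale: "psi e (scale c a) = scale c (psi e a)"
  by (simp add: psi_def brs gs algebra_simps)
lemma phi_zero[simp]: "phi e 0 = 0" by (simp add: phi_def)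
lemma psi_zero[simp]: "psi e 0 = 0" by (simp add: psi_def)
lemma phi_diff: "phi e (a - b) = phi e a - phi e b"
  by (simp add: phi_def brs gs algebra_simps)

lemma two: "scale (2 * c) v = scale c v + scale c v"
  by (metis mult_2 V.scale_left_distrib)

lemma psi_phi: assumes e: "extremal scale br e" shows "psi e (phi e v) = v"
proof -
  have "g e (phi e v) = g e v"
    by (simp add: phi_def gs g_self[OF e] g_self_br[OF e])
  moreover have "br e (phi e v) = br e v + (scale (g e v) e + scale (g e v) e)"
    by (simp add: phi_def brs id1[OF e] two)
  ultimately show ?thesis
    by (simp add: phi_def) (simp add: psi_def algebra_simps)
qed

lemma phi_psi: assumes e: "extremal scale br e" shows "phi e (psi e v) = v"
proof -
  have "g e (psi e v) = g e v"
    by (simp add: psi_def gs g_self[OF e] g_self_br[OF e])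
  moreover have "br e (psi e v) = br e v - (scale (g e v) e + scale (g e v) e)"
    by (simp add: psi_def brs id1[OF e] two)
  ultimately show ?thesis
    by (simp add: psi_def) (simp add: phi_def algebra_simps)
qed

lemma phi_hom: assumes e: "extremal scale br e"
  shows "br (phi e a) (phi e b) = phi e (br a b)"
proof -
  have f1: "br (br e a) (br e b) = scale (g e (br a b)) e + scale (g e b) (br e a) - scale (g e a) (br e b)"
    by (rule id2[OF e])
  have f2: "br (br e a) e = - scale (2 * g e a) e"
    by (simp add: anti[of "br e a" e] id1[OF e])
  have f3: "br e (br e b) = scale (2 * g e b) e" by (rule id1[OF e])
  have f4: "br a e = - br e a" by (rule anti)
  have f5: "br (br e a) b = br e (br a b) - br a (br e b)"
    using der[of e a b] by (simp add: algebra_simps)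
  show ?thesis
    unfolding phi_def
    by (simp add: brs f1 f2 f3 f4 f5 algebra_simps)
qed

lemma psi_hom: assumes e: "extremal scale br e"
  shows "br (psi e a) (psi e b) = psi e (br a b)"
proof -
  have "br a b = br (phi e (psi e a)) (phi e (psi e b))" by (simp add: phi_psi[OF e])
  also have "\<dots> = phi e (br (psi e a) (psi e b))" by (rule phi_hom[OF e])
  finally have "psi e (br a b) = psi e (phi e (br (psi e a) (psi e b)))" by simp
  then show ?thesis by (simp add: psi_phi[OF e])
qed


lemma K1: assumes e: "extremal scale br e"
  shows "br (phi e a) v = phi e (br a (psi e v))"
  by (metis phi_hom[OF e] phi_psi[OF e])

lemma transport:
  assumes a: "extremal scale br a" and e: "extremal scale br e"
  shows "extremal_ids scale br (phi e a) (\<lambda>v. g a (psi e v))"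
  unfolding extremal_ids_def
proof (intro conjI allI)
  fix u w
  let ?c = "phi e a"
  have "br ?c (br ?c u) = phi e (br a (br a (psi e u)))"
    by (simp add: K1[OF e] psi_phi[OF e])
  also have "\<dots> = scale (2 * g a (psi e u)) ?c" by (simp add: id1[OF a] phi_scale)
  finally show "br ?c (br ?c u) = scale (2 * g a (psi e u)) ?c" .
  have "br (br ?c u) (br ?c w) = phi e (br (br a (psi e u)) (br a (psi e w)))"
    by (simp add: K1[OF e] psi_phi[OF e])
  also have "\<dots> = scale (g a (psi e (br u w))) ?c + scale (g a (psi e w)) (br ?c u) - scale (g a (psi e u)) (br ?c w)"
    by (simp add: id2[OF a] phi_scale phi_add phi_diff psi_hom[OF e] K1[OF e])
  finally show "br (br ?c u) (br ?c w) = scale (g a (psi e (br u w))) ?c + scale (g a (psi e w)) (br ?c u) - scale (g a (psi e u)) (br ?c w)" .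
  have "psi e (br u (phi e (br a (psi e w)))) = br (psi e u) (br a (psi e w))"
    using psi_hom[OF e, of u "phi e (br a (psi e w))"] by (simp add: psi_phi[OF e])
  then have "br ?c (br u (br ?c w)) = phi e (br a (br (psi e u) (br a (psi e w))))"
    by (simp add: K1[OF e])
  also have "\<dots> = scale (g a (psi e (br u w))) ?c - scale (g a (psi e w)) (br ?c u) - scale (g a (psi e u)) (br ?c w)"
    by (simp add: id3[OF a] phi_scale phi_add phi_diff psi_hom[OF e] K1[OF e])
  finally show "br ?c (br u (br ?c w)) = scale (g a (psi e (br u w))) ?c - scale (g a (psi e w)) (br ?c u) - scale (g a (psi e u)) (br ?c w)" .
qed

lemma phi_extremal:
  assumes a: "extremal scale br a" and e: "extremal scale br e"
  shows "extremal scale br (phi e a)"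
proof -
  have "phi e a \<noteq> 0" using psi_phi[OF e, of a] ext_nz[OF a] by auto
  then show ?thesis unfolding extremal_def using transport[OF a e] by blast
qed

lemma phi_sandwich:
  assumes e: "extremal scale br e" and s: "sandwich br (phi e a)"
  shows "sandwich br a"
  unfolding sandwich_def
proof (intro conjI allI)
  fix u w
  have "br a (br a u) = psi e (br (phi e a) (br (phi e a) (phi e u)))"
    by (simp add: phi_hom[OF e] psi_phi[OF e])
  then show "br a (br a u) = 0" using s unfolding sandwich_def by simp
  have "br a (br u (br a w)) = psi e (br (phi e a) (br (phi e u) (br (phi e a) (phi e w))))"
    by (simp add: phi_hom[OF e] psi_phi[OF e])
  then show "br a (br u (br a w)) = 0" using s unfolding sandwich_def by simp
qed

lemma phi_pure:
  assumes a: "pure_extremal scale br a" and e: "extremal scale br e"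
  shows "pure_extremal scale br (phi e a)"
  using a phi_extremal[OF _ e] phi_sandwich[OF e] unfolding pure_extremal_def by blast


lemma div_scale: assumes "k \<noteq> 0" and "scale k p = scale m q" shows "p = scale (m / k) q"
proof -
  have "p = scale (inverse k) (scale k p)" using assms(1) by simp
  also have "\<dots> = scale (inverse k * m) q" using assms(2) by simp
  finally show ?thesis by (simp add: divide_inverse mult.commute)
qed

lemma uniq:
  assumes c: "extremal scale br c" and n: "\<not> sandwich br c"
    and i1: "extremal_ids scale br c g1" and i2: "extremal_ids scale br c g2"
    and l1: "\<And>p q k. g1 (p - scale k q) = g1 p - k * g1 q"
    and l2: "\<And>p q k. g2 (p - scale k q) = g2 p - k * g2 q"
  shows "g1 v = g2 v"
proof (rule ccontr)
  assume ne: "g1 v \<noteq> g2 v"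
  define d where "d w = g1 w - g2 w" for w
  have dl: "d (p - scale k q) = d p - k * d q" for p q k
    by (simp add: d_def l1 l2 algebra_simps)
  have w0: "d v \<noteq> 0" using ne by (simp add: d_def)
  have c0: "c \<noteq> 0" by (rule ext_nz[OF c])
  have A1: "br c (br c u) = scale (2 * g1 u) c" for u using i1 unfolding extremal_ids_def by blast
  have B1: "br c (br c u) = scale (2 * g2 u) c" for u using i2 unfolding extremal_ids_def by blast
  have A3: "br c (br u (br c w)) = scale (g1 (br u w)) c - scale (g1 w) (br c u) - scale (g1 u) (br c w)" for u w
    using i1 unfolding extremal_ids_def by blast
  have B3: "br c (br u (br c w)) = scale (g2 (br u w)) c - scale (g2 w) (br c u) - scale (g2 u) (br c w)" for u w
    using i2 unfolding extremal_ids_def by blast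
  have R: "scale (d (br u w)) c - scale (d w) (br c u) - scale (d u) (br c w) = 0" for u w
  proof -
    have "scale (g1 (br u w)) c - scale (g1 w) (br c u) - scale (g1 u) (br c w) =
          scale (g2 (br u w)) c - scale (g2 w) (br c u) - scale (g2 u) (br c w)"
      using A3[of u w] B3[of u w] by simp
    then show ?thesis by (simp add: d_def V.scale_left_diff_distrib algebra_simps)
  qed
  have "scale (2 * g1 v) c = scale (2 * g2 v) c" using A1[of v] B1[of v] by (simp only:)
  then have "2 * g1 v = 2 * g2 v" using V.scale_right_imp_eq[OF c0] by blast
  then have "2 * d v = 0" by (simp add: d_def algebra_simps)
  then have two0: "(2::'k) = 0" using w0 by simp
  have sq0: "br c (br c u) = 0" for u using A1[of u] two0 by simp
  have dc: "d c = 0"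
  proof (rule ccontr)
    assume dc: "d c \<noteq> 0"
    show False
    proof (rule line_contra[OF c0])
      fix w
      have "scale (d c) (br c w) = scale (d (br c w)) c" using R[of c w] by (simp add: br_self)
      then show "\<exists>k. br c w = scale k c" using div_scale[OF dc] by blast
    qed
  qed
  have kerd: "br c u = scale (d (br u v) / d v) c" if "d u = 0" for u
  proof -
    have "scale (d v) (br c u) = scale (d (br u v)) c" using R[of u v] that by simp
    then show ?thesis using div_scale[OF w0] by blast
  qed
  have g1ker: "g1 u = 0" if du: "d u = 0" for u
  proof (rule ccontr)
    assume gu: "g1 u \<noteq> 0"
    let ?al = "d (br u v) / d v"
    have cu: "br c u = scale ?al c" by (rule kerd[OF du])
    show False
    proof (rule line_contra[OF c0])
      fix w
      have "br c (br u (br c w)) = br (br c u) (br c w) + br u (br c (br c w))" by (rule der)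
      also have "\<dots> = 0" by (simp add: cu br_scale_left sq0)
      finally have "scale (g1 (br u w)) c - scale (g1 w) (br c u) - scale (g1 u) (br c w) = 0"
        using A3[of u w] by simp
      then have "scale (g1 u) (br c w) = scale (g1 (br u w) - g1 w * ?al) c"
        by (simp add: cu V.scale_left_diff_distrib algebra_simps)
      then show "\<exists>k. br c w = scale k c" using div_scale[OF gu] by blast
    qed
  qed
  have lin: "g1 u = (g1 v / d v) * d u" for u
  proof -
    have "d (u - scale (d u / d v) v) = 0" using w0 by (simp add: dl)
    then have "g1 (u - scale (d u / d v) v) = 0" by (rule g1ker)
    then show ?thesis using w0 by (simp add: l1 field_simps)
  qed
  have "sandwich br c"
    unfolding sandwich_def
  proof (intro conjI allI)
    fix u w
    show "br c (br c u) = 0" by (rule sq0)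
    let ?l = "g1 v / d v"
    have "br c (br u (br c w)) = scale (g1 (br u w)) c - scale (g1 w) (br c u) - scale (g1 u) (br c w)"
      by (rule A3)
    also have "\<dots> = scale (?l * d (br u w)) c - scale (?l * d w) (br c u) - scale (?l * d u) (br c w)"
      by (simp only: lin[of "br u w"] lin[of w] lin[of u])
    also have "\<dots> = scale ?l (scale (d (br u w)) c - scale (d w) (br c u) - scale (d u) (br c w))"
      by (simp only: V.scale_right_diff_distrib V.scale_scale)
    also have "\<dots> = 0" by (simp only: R V.scale_zero_right)
    finally show "br c (br u (br c w)) = 0" .
  qed
  with n show False by simp
qed

lemma psi_diff: "psi e (a - b) = psi e a - psi e b"
  by (simp add: psi_def brs gs algebra_simps)

lemma INV:
  assumes a: "pure_extremal scale br a" and e: "extremal scale br e"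
  shows "g a (br e r) = - g (br e a) r"
proof -
  have ea: "extremal scale br a" using a unfolding pure_extremal_def by simp
  let ?c = "phi e a"
  have pc: "pure_extremal scale br ?c" by (rule phi_pure[OF a e])
  have ec: "extremal scale br ?c" and nc: "\<not> sandwich br ?c" using pc unfolding pure_extremal_def by simp_all
  have eq: "g ?c v = g a (psi e v)" for v
  proof (rule uniq[OF ec nc g_ext[OF ec] transport[OF ea e]])
    show "g ?c (p - scale k q) = g ?c p - k * g ?c q" for p q k by (simp add: gs)
    show "g a (psi e (p - scale k q)) = g a (psi e p) - k * g a (psi e q)" for p q k
      by (simp add: psi_diff psi_scale gs)
  qed
  have bea: "br e a = ?c - a - scale (g e a) e" by (simp add: phi_def)
  have "g (br e a) r = g ?c r - g a r - g e a * g e r" by (simp add: bea gs)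
  also have "\<dots> = g a (psi e r) - g a r - g e a * g e r" by (simp add: eq)
  also have "\<dots> = - g a (br e r)" by (simp add: psi_def gs g_sym[of a e])
  finally show ?thesis by simp
qed


lemma gen_sub: "lie_subalgebra scale br S \<Longrightarrow> (\<And>a. pure_extremal scale br a \<Longrightarrow> a \<in> S) \<Longrightarrow> S = UNIV"
  using gen unfolding lie_generated_by_def by blast

lemma ex_pure: "\<exists>t. pure_extremal scale br t"
proof (rule ccontr)
  assume np: "\<not> ?thesis"
  have "lie_subalgebra scale br {0}"
    unfolding lie_subalgebra_def by simp
  then have "{0} = (UNIV :: 'L set)" using np gen_sub by blast
  then have "\<And>p::'L. p = 0" by auto
  then show False using nonab by (metis br_zero_left)
qed

lemma pure_g_nz: assumes t: "pure_extremal scale br t" shows "\<exists>r. g t r \<noteq> 0"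
proof (rule ccontr)
  assume "\<not> ?thesis"
  then have z: "\<And>r. g t r = 0" by simp
  have et: "extremal scale br t" using t unfolding pure_extremal_def by simp
  have "sandwich br t" unfolding sandwich_def
    by (simp add: id1[OF et] id3[OF et] z)
  then show False using t unfolding pure_extremal_def by simp
qed

definition Irad where "Irad = {r. \<forall>t. pure_extremal scale br t \<longrightarrow> g t r = 0}"

lemma Irad_sub: "V.subspace Irad"
  unfolding V.subspace_def Irad_def by (simp add: gs)

lemma Irad_br: assumes e: "pure_extremal scale br e" and r: "r \<in> Irad"
  shows "br e r \<in> Irad"
  unfolding Irad_def
proof (intro CollectI allI impI)
  fix t assume t: "pure_extremal scale br t"
  have ee: "extremal scale br e" using e unfolding pure_extremal_def by simp
  have r0: "\<And>s. pure_extremal scale br s \<Longrightarrow> g s r = 0" using r unfolding Irad_def by simp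
  have bet: "br e t = phi e t - t - scale (g e t) e" by (simp add: phi_def)
  have "g t (br e r) = - g (br e t) r" by (rule INV[OF t ee])
  also have "\<dots> = - (g (phi e t) r - g t r - g e t * g e r)" by (simp add: bet gs)
  also have "\<dots> = 0" using r0[OF phi_pure[OF t ee]] r0[OF t] r0[OF e] by simp
  finally show "g t (br e r) = 0" .
qed

lemma radI: assumes "\<And>t. pure_extremal scale br t \<Longrightarrow> g t r = 0" shows "r = 0"
proof -
  let ?S = "{v. \<forall>r\<in>Irad. br v r \<in> Irad}"
  have IS: "V.subspace Irad" by (rule Irad_sub)
  have sub: "lie_subalgebra scale br ?S"
    unfolding lie_subalgebra_def
  proof (intro conjI ballI)
    show "V.subspace ?S"
      unfolding V.subspace_def
      using V.subspace_0[OF IS] V.subspace_add[OF IS] V.subspace_scale[OF IS]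
      by (simp add: br_add_left br_scale_left)
  next
    fix v w assume v: "v \<in> ?S" and w: "w \<in> ?S"
    show "br v w \<in> ?S"
    proof (intro CollectI ballI)
      fix r assume r: "r \<in> Irad"
      have "br (br v w) r = br v (br w r) - br w (br v r)" using der[of v w r] by (simp add: algebra_simps)
      moreover have "br v (br w r) \<in> Irad" using v w r by simp
      moreover have "br w (br v r) \<in> Irad" using v w r by simp
      ultimately show "br (br v w) r \<in> Irad" using V.subspace_diff[OF IS] by simp
    qed
  qed
  have "?S = UNIV" by (rule gen_sub[OF sub]) (simp add: Irad_br)
  then have "lie_ideal scale br Irad" unfolding lie_ideal_def using IS by auto
  then have "Irad = {0} \<or> Irad = UNIV" by (rule ideals)
  moreover have "Irad \<noteq> UNIV"
  proof -
    obtain t where t: "pure_extremal scale br t" using ex_pure by blast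
    obtain q where "g t q \<noteq> 0" using pure_g_nz[OF t] by blast
    then have "q \<notin> Irad" using t unfolding Irad_def by auto
    then show ?thesis by auto
  qed
  ultimately have "Irad = {0}" by simp
  moreover have "r \<in> Irad" using assms unfolding Irad_def by simp
  ultimately show ?thesis by simp
qed


lemma x_pure:
  assumes ex: "extremal scale br x" and ey: "extremal scale br y" and gxy: "g x y = 1"
  shows "\<not> sandwich br x"
proof
  assume sx: "sandwich br x"
  define h where "h = br x y"
  have x0: "x \<noteq> 0" by (rule ext_nz[OF ex])
  have sw1: "br x (br x u) = 0" for u using sx unfolding sandwich_def by simp
  have sw3: "br x (br u (br x w)) = 0" for u w using sx unfolding sandwich_def by simp
  have "scale 2 x = 0" using id1[OF ex, of y] sw1[of y] gxy by simp
  then have two0: "(2::'k) = 0" using x0 by simp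
  have gyx: "g y x = 1" using gxy g_sym by metis
  have A: "br x w = scale (g x (br y w)) x - scale (g x w) h" for w
    using id3[OF ex, of y w] sw3[of y w] gxy unfolding h_def by (simp add: algebra_simps)
  have yh: "br y h = 0"
    unfolding h_def using anti[of x y] id1[OF ey, of x] two0 by (simp add: br_minus_right)
  have xh: "br x h = 0" unfolding h_def by (rule sw1)
  let ?Sp = "V.span {x, y, h}"
  have inx: "x \<in> ?Sp" and iny: "y \<in> ?Sp" and inh: "h \<in> ?Sp" by (simp_all add: V.span_base)
  have Axw: "br x w \<in> ?Sp" for w
    unfolding A by (intro V.span_diff V.span_scale inx inh)
  have Byw: "br y w \<in> ?Sp" for w
  proof -
    have e3: "br y (br x (br y w)) = scale (g y (br x w)) y - scale (g y w) (br y x) - scale (g y x) (br y w)"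
      by (rule id3[OF ey])
    have byx: "br y x = - h" unfolding h_def by (rule anti)
    have "br y (br x (br y w)) = scale (g x (br y (br y w))) (br y x) - scale (g x (br y w)) (br y h)"
      by (simp add: A[of "br y w"] brs)
    then have "br y (br x (br y w)) = - scale (g x (br y (br y w))) h"
      by (simp add: yh byx)
    with e3 gyx have "br y w = scale (g y (br x w)) y + scale (g y w) h + scale (g x (br y (br y w))) h"
      by (simp add: byx algebra_simps)
    then show ?thesis by (subst \<open>br y w = _\<close>) (intro V.span_add V.span_scale iny inh)
  qed
  have gen3: "br u s \<in> ?Sp" if "s \<in> {x, y, h}" for u s
  proof -
    have bux: "br u x \<in> ?Sp" using Axw[of u] anti[of x u] V.span_neg by fastforce
    have buy: "br u y \<in> ?Sp" using Byw[of u] anti[of y u] V.span_neg by fastforce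
    have "br u h = br (br u x) y + br x (br u y)" unfolding h_def by (rule der)
    also have "\<dots> = - br y (br u x) + br x (br u y)" by (simp add: anti[of "br u x" y])
    finally have buh: "br u h \<in> ?Sp" using Byw Axw V.span_neg V.span_add by metis
    show ?thesis using that bux buy buh by blast
  qed
  have ideal: "lie_ideal scale br ?Sp"
    unfolding lie_ideal_def
  proof (intro conjI allI ballI)
    show "V.subspace ?Sp" by simp
    fix u s assume "s \<in> ?Sp"
    then show "br u s \<in> ?Sp"
    proof (induct rule: V.span_induct_alt)
      case base then show ?case by (simp add: V.span_zero)
    next
      case (step c a b)
      have "br u (scale c a + b) = scale c (br u a) + br u b" by (simp add: brs)
      then show ?case using gen3[OF step(1), of u] step(2) by (simp add: V.span_add V.span_scale)
    qed
  qed
  have "?Sp = UNIV" using ideals[OF ideal] inx x0 by auto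
  then have hc: "br h w = 0" for w
  proof -
    assume U: "?Sp = UNIV"
    have "w \<in> ?Sp" using U by simp
    then show ?thesis
    proof (induct rule: V.span_induct_alt)
      case base then show ?case by simp
    next
      case (step c a b)
      have "br h a = 0" using step(1) xh yh anti[of x h] anti[of y h] br_self[of h] by auto
      then show ?case using step(2) by (simp add: brs)
    qed
  qed
  show False
  proof (cases "h = 0")
    case True
    show False
    proof (rule line_contra[OF x0])
      fix w show "\<exists>k. br x w = scale k x" using A[of w] True by auto
    qed
  next
    case False
    show False
    proof (rule line_contra[OF False])
      fix w show "\<exists>k. br h w = scale k h" using hc[of w] by (metis V.scale_zero_left)
    qed
  qed
qed

lemma LA1:
  assumes z: "\<And>w. Q w \<Longrightarrow> f w = 0 \<Longrightarrow> p w = 0"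
    and Qc: "\<And>a b k. Q a \<Longrightarrow> Q b \<Longrightarrow> Q (a - scale k b)"
    and fl: "\<And>a b k. f (a - scale k b) = f a - k * f b"
    and pl: "\<And>a b k. p (a - scale k b) = p a - k * p b"
  shows "\<exists>l. \<forall>w. Q w \<longrightarrow> p w = l * f w"
proof (cases "\<exists>w0. Q w0 \<and> f w0 \<noteq> 0")
  case True
  then obtain w0 where q0: "Q w0" and f0: "f w0 \<noteq> 0" by blast
  show ?thesis
  proof (intro exI allI impI)
    fix w assume qw: "Q w"
    have "f (w - scale (f w / f w0) w0) = 0" using f0 by (simp add: fl)
    then have "p (w - scale (f w / f w0) w0) = 0" using z Qc[OF qw q0] by blast
    then show "p w = (p w0 / f w0) * f w" using f0 by (simp add: pl field_simps)
  qed
next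
  case False
  then show ?thesis by (intro exI[of _ 0]) (auto intro: z)
qed


lemma Zlem:
  assumes ex: "extremal scale br x" and ey: "extremal scale br y" and gxy: "g x y = 1"
    and u: "u \<in> grading_U g br x y"
    and hyp: "\<And>w. w \<in> grading_U g br x y \<Longrightarrow> br (br x u) (br x w) = 0"
  shows "br x u = 0"
proof -
  define h where "h = br x y"
  have U_iff: "w \<in> grading_U g br x y \<longleftrightarrow> g x w = 0 \<and> g y w = 0 \<and> g h w = 0" for w
    unfolding grading_U_def h_def by (simp add: g_sym[of w])
  have ux: "g x u = 0" and uy: "g y u = 0" and uh: "g h u = 0" using u U_iff by auto
  have px: "pure_extremal scale br x" using x_pure[OF ex ey gxy] ex unfolding pure_extremal_def by simp
  have x0: "x \<noteq> 0" by (rule ext_nz[OF ex])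
  define psi' where "psi' w = g x (br w u)" for w
  have P1: "psi' w = 0" if w: "w \<in> grading_U g br x y" for w
  proof -
    have "br (br x u) (br x w) = scale (g x (br u w)) x + scale (g x w) (br x u) - scale (g x u) (br x w)"
      by (rule id2[OF ex])
    then have "scale (g x (br u w)) x = 0" using hyp[OF w] ux w U_iff by simp
    then have "g x (br u w) = 0" using x0 by simp
    then show ?thesis unfolding psi'_def by (simp add: anti[of w u] gs)
  qed
  have psil: "psi' (a - scale k b) = psi' a - k * psi' b" for a b k
    unfolding psi'_def by (simp add: brs gs)
  have gl: "g v (a - scale k b) = g v a - k * g v b" for v a b k by (simp add: gs)
  obtain gam where gam: "\<forall>w. (g x w = 0 \<and> g y w = 0) \<longrightarrow> psi' w = gam * g h w"
  proof -
    have "\<exists>l. \<forall>w. (g x w = 0 \<and> g y w = 0) \<longrightarrow> psi' w = l * g h w"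
      by (rule LA1[where f="g h"]) (auto simp: gl psil U_iff intro: P1)
    then show ?thesis using that by blast
  qed
  obtain bet where bet: "\<forall>w. g x w = 0 \<longrightarrow> psi' w - gam * g h w = bet * g y w"
  proof -
    have "\<exists>l. \<forall>w. g x w = 0 \<longrightarrow> psi' w - gam * g h w = l * g y w"
      by (rule LA1[where f="g y"]) (auto simp: gl psil gam algebra_simps)
    then show ?thesis using that by blast
  qed
  obtain alp where alp: "\<forall>w. True \<longrightarrow> psi' w - gam * g h w - bet * g y w = alp * g x w"
  proof -
    have "\<exists>l. \<forall>w. True \<longrightarrow> psi' w - gam * g h w - bet * g y w = l * g x w"
      by (rule LA1[where f="g x"]) (auto simp: gl psil bet algebra_simps)
    then show ?thesis using that by blast
  qed
  have psiw: "psi' w = alp * g x w + bet * g y w + gam * g h w" for w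
    using alp[rule_format, of w] by (simp add: algebra_simps)
  have gxx: "g x x = 0" by (rule g_self[OF ex])
  have gyy: "g y y = 0" by (rule g_self[OF ey])
  have gxh: "g h x = 0" unfolding h_def using g_self_br[OF ex, of y] g_sym by metis
  have gyh: "g h y = 0"
  proof -
    have "g y (br x y) = - g y (br y x)" by (simp add: anti[of x y] gs)
    then show ?thesis unfolding h_def g_sym[of "br x y" y] using g_self_br[OF ey, of x] by simp
  qed
  have gyx: "g y x = 1" using gxy g_sym by metis
  have "psi' x = 0" unfolding psi'_def using g_self_br[OF ex, of u] by simp
  then have b0: "bet = 0" using psiw[of x] gxx gyx gxh by simp
  have "psi' y = - g (br y x) u" unfolding psi'_def by (rule INV[OF px ey])
  also have "\<dots> = g h u" unfolding h_def by (simp add: anti[of x y] gs)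
  finally have "psi' y = 0" using uh by simp
  then have a0: "alp = 0" using psiw[of y] gxy gyy gyh b0 by simp
  have "g t (br x u + scale gam h) = 0" if t: "pure_extremal scale br t" for t
  proof -
    have et: "extremal scale br t" using t unfolding pure_extremal_def by simp
    have "g t (br x u) = - g (br x t) u" by (rule INV[OF t ex])
    moreover have "psi' t = - g (br t x) u" unfolding psi'_def by (rule INV[OF px et])
    moreover have "g (br t x) u = - g (br x t) u" by (simp add: anti[of x t] gs)
    ultimately have "g t (br x u) = - psi' t" by simp
    also have "\<dots> = - gam * g h t" using psiw[of t] a0 b0 by simp
    finally show ?thesis by (simp add: gs g_sym[of h t])
  qed
  then have z: "br x u + scale gam h = 0" by (rule radI)
  define v where "v = u + scale gam y"
  have xv: "br x v = 0" unfolding v_def using z unfolding h_def by (simp add: brs)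
  have gxv: "g x v = gam" unfolding v_def using ux gxy by (simp add: gs)
  have "gam = 0"
  proof (rule ccontr)
    assume gn: "gam \<noteq> 0"
    show False
    proof (rule line_contra[OF x0])
      fix s
      have "br x (br s (br x v)) = scale (g x (br s v)) x - scale (g x v) (br x s) - scale (g x s) (br x v)"
        by (rule id3[OF ex])
      then have "scale gam (br x s) = scale (g x (br s v)) x" using xv gxv by simp
      then show "\<exists>k. br x s = scale k x" using div_scale[OF gn] by blast
    qed
  qed
  then show ?thesis using z by simp
qed

end

theorem lemma2p11:
  fixes scale :: "'k::field \<Rightarrow> 'L::ab_group_add \<Rightarrow> 'L"
    and br :: "'L \<Rightarrow> 'L \<Rightarrow> 'L"
    and g :: "'L \<Rightarrow> 'L \<Rightarrow> 'k"
    and x y :: 'L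
  assumes "simple_lie_algebra scale br"
    and "lie_generated_by scale br {a. pure_extremal scale br a}"
    and "extremal_form scale br g"
    and "extremal scale br x" and "extremal scale br y"
    and "g x y = 1"
  shows "centre_part br (L_minus1 g br x y) = {0} \<and> centre_part br (L_plus1 g br x y) = {0}"
proof -
  interpret LA scale br g using assms(1-3) by unfold_locales
  have gyx: "g y x = 1" using assms(6) g_sym by metis
  have Usym: "grading_U g br y x = grading_U g br x y"
    unfolding grading_U_def by (auto simp: anti[of x y] gs)
  have U0: "0 \<in> grading_U g br x y" unfolding grading_U_def by simp
  have main: "centre_part br (br a ` grading_U g br x y) = {0}"
    if ea: "extremal scale br a" and eb: "extremal scale br b" and gab: "g a b = 1"
      and UU: "grading_U g br a b = grading_U g br x y" for a b
  proof
    show "centre_part br (br a ` grading_U g br x y) \<subseteq> {0}"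
    proof
      fix z assume z: "z \<in> centre_part br (br a ` grading_U g br x y)"
      then obtain u where u: "u \<in> grading_U g br x y" and zu: "z = br a u"
        unfolding centre_part_def by auto
      have "br (br a u) (br a w) = 0" if w: "w \<in> grading_U g br a b" for w
        using z w UU unfolding centre_part_def zu by auto
      then have "br a u = 0" using Zlem[OF ea eb gab] u UU by blast
      then show "z \<in> {0}" using zu by simp
    qed
    show "{0} \<subseteq> centre_part br (br a ` grading_U g br x y)"
      unfolding centre_part_def using U0 by (auto intro: image_eqI[of 0 _ 0])
  qed
  show ?thesis
    unfolding L_minus1_def L_plus1_def
    using main[OF assms(4) assms(5) assms(6) refl] main[OF assms(5) assms(4) gyx Usym] by simp
qed

end
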